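(* In the compulsory constrained two-facility location setting described in the context, for every location profile $\mathbf{x}\in\mathbb{R}^n$, the peak of $\mathrm{cen}(\mathbf{x})$ in $AP$ is an optimal solution for the maximum cost objective, i.e. it minimizes $\max_{j}\max\{|y_1-x_j|,|y_2-x_j|\}$ over all feasible $(y_1,y_2)$.
   Context: $n$ agents have locations $x_1,\dots,x_n\in\mathbb{R}$; $\mathrm{cen}(\mathbf{x})=(\min_j x_j+\max_j x_j)/2$. $A=\{a_1\le\dots\le a_m\}$, $m\ge2$, is a multiset of alternative locations; a feasible outcome places $F_1$ at $y_1\in A$ and $F_2$ at $y_2\in A\setminus\{y_1\}$ (one copy removed). $AP=\{(a_1,a_2),\dots,(a_{m-1},a_m)\}$. Zones: $Z_1=(-\infty,\frac{a_1+a_3}{2}]$, $Z_k=(\frac{a_{k-1}+a_{k+1}}{2},\frac{a_k+a_{k+2}}{2}]$ for $2\le k\le m-2$, $Z_{m-1}=(\frac{a_{m-2}+a_m}{2},\infty)$ ($Z_1=\mathbb{R}$ if $m=2$); the peak in $AP$ of a point $z\in Z_k$ is $(a_k,a_{k+1})$. *)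

theory Defs
  imports Complex_Main
begin

(* Agents are indexed 1..n with locations x j; alternatives are indexed 1..m with
   locations a 1 <= ... <= a m (a multiset given as a sorted indexed family). *)

definition cen :: "nat \<Rightarrow> (nat \<Rightarrow> real) \<Rightarrow> real" where
  "cen n x = (Min (x ` {1..n}) + Max (x ` {1..n})) / 2"

definition max_cost :: "nat \<Rightarrow> (nat \<Rightarrow> real) \<Rightarrow> real \<Rightarrow> real \<Rightarrow> real" where
  "max_cost n x y1 y2 = Max ((\<lambda>j. max \<bar>y1 - x j\<bar> \<bar>y2 - x j\<bar>) ` {1..n})"

(* feasible outcome: F1 at a i, F2 at a j, distinct copies i \<noteq> j of the multiset A *)
definition feasible :: "nat \<Rightarrow> (nat \<Rightarrow> real) \<Rightarrow> real \<Rightarrow> real \<Rightarrow> bool" where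
  "feasible m a y1 y2 = (\<exists>i\<in>{1..m}. \<exists>j\<in>{1..m}. i \<noteq> j \<and> y1 = a i \<and> y2 = a j)"

definition zone :: "nat \<Rightarrow> (nat \<Rightarrow> real) \<Rightarrow> nat \<Rightarrow> real set" where
  "zone m a k =
     (if m = 2 then UNIV
      else if k = 1 then {.. (a 1 + a 3) / 2}
      else if k = m - 1 then {(a (m-2) + a m) / 2 <..}
      else {(a (k-1) + a (k+1)) / 2 <.. (a k + a (k+2)) / 2})"

definition is_peak :: "nat \<Rightarrow> (nat \<Rightarrow> real) \<Rightarrow> real \<Rightarrow> real \<times> real \<Rightarrow> bool" where
  "is_peak m a z p = (\<exists>k\<in>{1..m-1}. z \<in> zone m a k \<and> p = (a k, a (k+1)))"

end

theory Submission
  imports Defs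
begin

lemma maxLR:
  fixes y L R :: real
  assumes "L \<le> R"
  shows "max \<bar>y - L\<bar> \<bar>y - R\<bar> = \<bar>y - (L+R)/2\<bar> + (R-L)/2"
  using assms by (cases "y \<le> (L+R)/2") (auto simp: abs_if max_def field_simps)

lemma key_lt:
  fixes a :: "nat \<Rightarrow> real" and c :: real
  assumes mono: "\<And>i j. 1 \<le> i \<Longrightarrow> i \<le> j \<Longrightarrow> j \<le> m \<Longrightarrow> a i \<le> a j"
    and k: "1 \<le> k" "k + 1 \<le> m"
    and U: "k + 2 \<le> m \<Longrightarrow> 2 * c \<le> a k + a (k+2)"
    and Lo: "2 \<le> k \<Longrightarrow> a (k-1) + a (k+1) \<le> 2 * c"
    and ij: "1 \<le> i" "i < j" "j \<le> m"
  shows "max \<bar>a k - c\<bar> \<bar>a (k+1) - c\<bar> \<le> max \<bar>a i - c\<bar> \<bar>a j - c\<bar>"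
proof -
  have kk: "a k \<le> a (k+1)" using mono k by simp
  consider "j \<le> k" | "k + 1 \<le> i" | "i \<le> k" "k < j" by linarith
  then show ?thesis
  proof cases
    case 1
    then have "2 \<le> k" using ij by simp
    have "a i \<le> a (k-1)" by (rule mono) (use ij 1 k in auto)
    moreover have "a (k-1) \<le> a k" using mono \<open>2 \<le> k\<close> k by simp
    ultimately show ?thesis using Lo[OF \<open>2 \<le> k\<close>] kk by (simp add: abs_if max_def split: if_splits)
  next
    case 2
    then have "k + 2 \<le> m" using ij by simp
    have "a (k+2) \<le> a j" using mono ij 2 by simp
    moreover have "a (k+1) \<le> a (k+2)" using mono \<open>k+2 \<le> m\<close> k by simp
    ultimately show ?thesis using U[OF \<open>k+2 \<le> m\<close>] kk by (simp add: abs_if max_def split: if_splits)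
  next
    case 3
    have "a i \<le> a k" using mono ij 3 k by simp
    moreover have "a (k+1) \<le> a j" using mono ij 3 k by simp
    ultimately show ?thesis using kk by (simp add: abs_if max_def split: if_splits)
  qed
qed

lemma key:
  fixes a :: "nat \<Rightarrow> real" and c :: real
  assumes mono: "\<And>i j. 1 \<le> i \<Longrightarrow> i \<le> j \<Longrightarrow> j \<le> m \<Longrightarrow> a i \<le> a j"
    and k: "1 \<le> k" "k + 1 \<le> m"
    and U: "k + 2 \<le> m \<Longrightarrow> 2 * c \<le> a k + a (k+2)"
    and Lo: "2 \<le> k \<Longrightarrow> a (k-1) + a (k+1) \<le> 2 * c"
    and ij: "i \<in> {1..m}" "j \<in> {1..m}" "i \<noteq> j"
  shows "max \<bar>a k - c\<bar> \<bar>a (k+1) - c\<bar> \<le> max \<bar>a i - c\<bar> \<bar>a j - c\<bar>"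
proof (cases "i < j")
  case True
  then show ?thesis using key_lt[OF mono k U Lo] ij by auto
next
  case False
  then have "j < i" using ij by simp
  then show ?thesis using key_lt[OF mono k U Lo, of j i] ij by (auto simp: max.commute)
qed

theorem lemma3:
  fixes n m :: nat and x a :: "nat \<Rightarrow> real" and p :: "real \<times> real"
  assumes "n \<ge> 1" and "m \<ge> 2"
    and "\<And>i j. 1 \<le> i \<Longrightarrow> i \<le> j \<Longrightarrow> j \<le> m \<Longrightarrow> a i \<le> a j"
    and "is_peak m a (cen n x) p"
  shows "feasible m a (fst p) (snd p) \<and>
         (\<forall>y1 y2. feasible m a y1 y2 \<longrightarrow>
            max_cost n x (fst p) (snd p) \<le> max_cost n x y1 y2)"
proof -
  define c where "c = cen n x"
  define L where "L = Min (x ` {1..n})"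
  define R where "R = Max (x ` {1..n})"
  have fin: "finite (x ` {1..n})" and ne: "x ` {1..n} \<noteq> {}" using assms(1) by auto
  have "L \<in> x ` {1..n}" unfolding L_def using fin ne by (rule Min_in)
  then obtain jL where jL: "jL \<in> {1..n}" "x jL = L" by auto
  have "R \<in> x ` {1..n}" unfolding R_def using fin ne by (rule Max_in)
  then obtain jR where jR: "jR \<in> {1..n}" "x jR = R" by auto
  have LR: "\<And>j. j \<in> {1..n} \<Longrightarrow> L \<le> x j \<and> x j \<le> R"
    unfolding L_def R_def using fin by auto
  have c_eq: "c = (L + R) / 2" unfolding c_def cen_def L_def R_def by simp
  define M where "M y1 y2 = max (max \<bar>y1 - L\<bar> \<bar>y2 - L\<bar>) (max \<bar>y1 - R\<bar> \<bar>y2 - R\<bar>)" for y1 y2 :: real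
  have mc: "max_cost n x y1 y2 = M y1 y2" for y1 y2
  proof (rule antisym)
    show "max_cost n x y1 y2 \<le> M y1 y2" unfolding max_cost_def
    proof (rule Max.boundedI)
      show "finite ((\<lambda>j. max \<bar>y1 - x j\<bar> \<bar>y2 - x j\<bar>) ` {1..n})" by simp
      show "(\<lambda>j. max \<bar>y1 - x j\<bar> \<bar>y2 - x j\<bar>) ` {1..n} \<noteq> {}" using assms(1) by auto
      fix v assume "v \<in> (\<lambda>j. max \<bar>y1 - x j\<bar> \<bar>y2 - x j\<bar>) ` {1..n}"
      then obtain j where "j \<in> {1..n}" "v = max \<bar>y1 - x j\<bar> \<bar>y2 - x j\<bar>" by auto
      then show "v \<le> M y1 y2" using LR[of j] unfolding M_def by (simp add: abs_if max_def split: if_splits)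
    qed
  next
    have "max \<bar>y1 - x jL\<bar> \<bar>y2 - x jL\<bar> \<le> max_cost n x y1 y2"
      unfolding max_cost_def by (rule Max_ge) (use jL in auto)
    moreover have "max \<bar>y1 - x jR\<bar> \<bar>y2 - x jR\<bar> \<le> max_cost n x y1 y2"
      unfolding max_cost_def by (rule Max_ge) (use jR in auto)
    ultimately show "M y1 y2 \<le> max_cost n x y1 y2" unfolding M_def using jL jR by simp
  qed
  have M_eq: "M y1 y2 = max \<bar>y1 - c\<bar> \<bar>y2 - c\<bar> + (R - L) / 2" for y1 y2
  proof -
    have "L \<le> R" using LR[OF jL(1)] by simp
    have "M y1 y2 = max (max \<bar>y1 - L\<bar> \<bar>y1 - R\<bar>) (max \<bar>y2 - L\<bar> \<bar>y2 - R\<bar>)"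
      unfolding M_def by (simp add: max.assoc max.left_commute max.commute)
    also have "\<dots> = max \<bar>y1 - c\<bar> \<bar>y2 - c\<bar> + (R - L) / 2"
      unfolding maxLR[OF \<open>L \<le> R\<close>] c_eq by (simp add: max_add_distrib_right)
    finally show ?thesis .
  qed
  obtain k where k: "k \<in> {1..m-1}" "c \<in> zone m a k" "p = (a k, a (k+1))"
    using assms(4) unfolding is_peak_def c_def by blast
  have k1: "1 \<le> k" "k + 1 \<le> m" using k(1) assms(2) by auto
  have U: "2 * c \<le> a k + a (k+2)" if "k + 2 \<le> m"
    using k(2) that k1 unfolding zone_def by (auto simp: numeral_3_eq_3 numeral_2_eq_2 split: if_splits)
  have Lo: "a (k-1) + a (k+1) \<le> 2 * c" if "2 \<le> k"
    using k(2) that k1 unfolding zone_def by (auto simp: numeral_3_eq_3 numeral_2_eq_2 split: if_splits)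
  have feas: "feasible m a (fst p) (snd p)"
    unfolding feasible_def using k1 k(3) by (intro bexI[of _ k] bexI[of _ "k+1"]) auto
  moreover have "max_cost n x (fst p) (snd p) \<le> max_cost n x y1 y2" if fy: "feasible m a y1 y2" for y1 y2
  proof -
    obtain i j where ij: "i \<in> {1..m}" "j \<in> {1..m}" "i \<noteq> j" "y1 = a i" "y2 = a j"
      using fy unfolding feasible_def by blast
    have "max \<bar>a k - c\<bar> \<bar>a (k+1) - c\<bar> \<le> max \<bar>a i - c\<bar> \<bar>a j - c\<bar>"
      by (rule key[OF assms(3) k1 U Lo ij(1-3)])
    then show ?thesis unfolding mc M_eq using k(3) ij by simp
  qed
  ultimately show ?thesis by blast
qed

end
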